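(* Let $R$ be a partial algebra over an algebraically closed field $k$ in which every element is algebraic over $k$ (e.g. a finite-dimensional $k$-algebra with its standard partial algebra structure). Then a morphism of partial $k$-algebras $R\to k$ is uniquely determined by its restriction to the set of idempotents of $R$ (elements $e$ with $e\cdot e=e$).
   Context: A partial $k$-algebra is a set $R$ with a reflexive symmetric relation $\perp$ (commeasurability), partial operations $+,\cdot$ defined on pairs $a\perp b$, scalar multiplication $k\times R\to R$, and elements $0,1$ such that: every $a$ is commeasurable with $0$ and $1$; if $a_1,a_2,a_3$ are pairwise commeasurable and $\lambda\in k$ then $a_1+a_2$, $a_1a_2$, $\lambda a_1$ are commeasurable with $a_3$ (resp. $a_2$); for pairwise commeasurable $a_1,a_2,a_3$ the values of all commutative polynomials in them form a commutative $k$-algebra. A full $k$-algebra has the standard partial structure with $a\perp b$ iff $ab=ba$. An element $a$ is algebraic if $k[a]$ (values of polynomials in $a$) is finite-dimensional over $k$. A morphism $f\colon R\to k$ satisfies, for $a\perp b$, $\lambda\in k$: $f(\lambda a)=\lambda f(a)$, $f(a+b)=f(a)+f(b)$, $f(ab)=f(a)f(b)$, $f(0)=0$, $f(1)=1$. *)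

theory Defs
  imports "HOL-Computational_Algebra.Polynomial"
begin

text \<open>A partial k-algebra, given by its carrier, commeasurability relation, the (partial)
  operations (only meaningful on commeasurable pairs), scalar multiplication, zero and one.\<close>

record ('k, 'a) palg =
  pcarrier :: "'a set"
  pcm :: "'a \<Rightarrow> 'a \<Rightarrow> bool"
  padd :: "'a \<Rightarrow> 'a \<Rightarrow> 'a"
  pmul :: "'a \<Rightarrow> 'a \<Rightarrow> 'a"
  psmul :: "'k \<Rightarrow> 'a \<Rightarrow> 'a"
  pzero :: 'a
  pone :: 'a

inductive_set pgen :: "('k, 'a, 'b) palg_scheme \<Rightarrow> 'a \<Rightarrow> 'a \<Rightarrow> 'a \<Rightarrow> 'a set"
  for R a1 a2 a3 where
  g1: "a1 \<in> pgen R a1 a2 a3"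
| g2: "a2 \<in> pgen R a1 a2 a3"
| g3: "a3 \<in> pgen R a1 a2 a3"
| g0: "pzero R \<in> pgen R a1 a2 a3"
| gone: "pone R \<in> pgen R a1 a2 a3"
| gadd: "x \<in> pgen R a1 a2 a3 \<Longrightarrow> y \<in> pgen R a1 a2 a3 \<Longrightarrow> padd R x y \<in> pgen R a1 a2 a3"
| gmul: "x \<in> pgen R a1 a2 a3 \<Longrightarrow> y \<in> pgen R a1 a2 a3 \<Longrightarrow> pmul R x y \<in> pgen R a1 a2 a3"
| gsmul: "x \<in> pgen R a1 a2 a3 \<Longrightarrow> psmul R c x \<in> pgen R a1 a2 a3"

definition comm_alg_on :: "('k::field, 'a, 'b) palg_scheme \<Rightarrow> 'a set \<Rightarrow> bool" where
  "comm_alg_on R S \<longleftrightarrow>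
     pzero R \<in> S \<and> pone R \<in> S \<and>
     (\<forall>x\<in>S. \<forall>y\<in>S. pcm R x y \<and> padd R x y \<in> S \<and> pmul R x y \<in> S) \<and>
     (\<forall>c. \<forall>x\<in>S. psmul R c x \<in> S) \<and>
     (\<forall>x\<in>S. \<forall>y\<in>S. \<forall>z\<in>S.
        padd R (padd R x y) z = padd R x (padd R y z) \<and>
        pmul R (pmul R x y) z = pmul R x (pmul R y z) \<and>
        pmul R x (padd R y z) = padd R (pmul R x y) (pmul R x z)) \<and>
     (\<forall>x\<in>S. \<forall>y\<in>S. padd R x y = padd R y x \<and> pmul R x y = pmul R y x) \<and>
     (\<forall>x\<in>S. padd R x (pzero R) = x \<and> pmul R x (pone R) = x \<and>
        (\<exists>y\<in>S. padd R x y = pzero R)) \<and>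
     (\<forall>c d. \<forall>x\<in>S. \<forall>y\<in>S.
        psmul R c (psmul R d x) = psmul R (c * d) x \<and>
        psmul R (c + d) x = padd R (psmul R c x) (psmul R d x) \<and>
        psmul R c (padd R x y) = padd R (psmul R c x) (psmul R c y) \<and>
        psmul R c (pmul R x y) = pmul R (psmul R c x) y \<and>
        psmul R 1 x = x)"

definition partial_algebra :: "('k::field, 'a, 'b) palg_scheme \<Rightarrow> bool" where
  "partial_algebra R \<longleftrightarrow>
     pzero R \<in> pcarrier R \<and> pone R \<in> pcarrier R \<and>
     (\<forall>a\<in>pcarrier R. \<forall>b\<in>pcarrier R. pcm R a b \<longrightarrow>
        padd R a b \<in> pcarrier R \<and> pmul R a b \<in> pcarrier R) \<and>
     (\<forall>c. \<forall>a\<in>pcarrier R. psmul R c a \<in> pcarrier R) \<and>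
     (\<forall>a\<in>pcarrier R. pcm R a a) \<and>
     (\<forall>a\<in>pcarrier R. \<forall>b\<in>pcarrier R. pcm R a b \<longrightarrow> pcm R b a) \<and>
     (\<forall>a\<in>pcarrier R. pcm R a (pzero R) \<and> pcm R a (pone R)) \<and>
     (\<forall>a1\<in>pcarrier R. \<forall>a2\<in>pcarrier R. \<forall>a3\<in>pcarrier R. \<forall>c.
        pcm R a1 a2 \<and> pcm R a1 a3 \<and> pcm R a2 a3 \<longrightarrow>
          pcm R (padd R a1 a2) a3 \<and> pcm R (pmul R a1 a2) a3 \<and> pcm R (psmul R c a1) a3) \<and>
     (\<forall>a1\<in>pcarrier R. \<forall>a2\<in>pcarrier R. \<forall>a3\<in>pcarrier R.
        pcm R a1 a2 \<and> pcm R a1 a3 \<and> pcm R a2 a3 \<longrightarrow> comm_alg_on R (pgen R a1 a2 a3))"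

fun peval :: "('k, 'a, 'b) palg_scheme \<Rightarrow> 'a \<Rightarrow> 'k list \<Rightarrow> 'a" where
  "peval R a [] = pzero R"
| "peval R a (c # cs) = padd R (psmul R c (pone R)) (pmul R a (peval R a cs))"

definition kpoly :: "('k, 'a, 'b) palg_scheme \<Rightarrow> 'a \<Rightarrow> 'a set" where
  "kpoly R a = {peval R a cs | cs. True}"

inductive_set pspan :: "('k, 'a, 'b) palg_scheme \<Rightarrow> 'a set \<Rightarrow> 'a set" for R B where
  s0: "pzero R \<in> pspan R B"
| sB: "b \<in> B \<Longrightarrow> b \<in> pspan R B"
| sadd: "x \<in> pspan R B \<Longrightarrow> y \<in> pspan R B \<Longrightarrow> padd R x y \<in> pspan R B"
| ssmul: "x \<in> pspan R B \<Longrightarrow> psmul R c x \<in> pspan R B"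

text \<open>a is algebraic: k[a] is finite-dimensional over k (spanned by a finite subset).\<close>

definition palgebraic :: "('k, 'a, 'b) palg_scheme \<Rightarrow> 'a \<Rightarrow> bool" where
  "palgebraic R a \<longleftrightarrow> (\<exists>B. finite B \<and> B \<subseteq> kpoly R a \<and> kpoly R a \<subseteq> pspan R B)"

definition pmorphism :: "('k::field, 'a, 'b) palg_scheme \<Rightarrow> ('a \<Rightarrow> 'k) \<Rightarrow> bool" where
  "pmorphism R f \<longleftrightarrow>
     (\<forall>a\<in>pcarrier R. \<forall>b\<in>pcarrier R. \<forall>c. pcm R a b \<longrightarrow>
        f (psmul R c a) = c * f a \<and> f (padd R a b) = f a + f b \<and>
        f (pmul R a b) = f a * f b) \<and>
     f (pzero R) = 0 \<and> f (pone R) = 1"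

end

theory Submission imports Defs "HOL-Algebra.Ring" begin

locale pctx =
  fixes R :: "('k::field,'a,'b) palg_scheme" and a :: 'a
  assumes PA: "partial_algebra R" and aC: "a \<in> pcarrier R"
begin

abbreviation A where "A \<equiv> pgen R a a a"

definition S :: "'a ring" where
  "S = \<lparr>carrier = A, mult = pmul R, one = pone R, zero = pzero R, add = padd R\<rparr>"

lemma S_simps[simp]: "carrier S = A" "mult S = pmul R" "one S = pone R" "zero S = pzero R"
  "add S = padd R"
  by (simp_all add: S_def)

lemmas PA' = PA[unfolded partial_algebra_def]
lemmas PA_all = PA'[THEN conjunct1] PA'[THEN conjunct2, THEN conjunct1]
  PA'[THEN conjunct2, THEN conjunct2, THEN conjunct1]
  PA'[THEN conjunct2, THEN conjunct2, THEN conjunct2, THEN conjunct1]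
  PA'[THEN conjunct2, THEN conjunct2, THEN conjunct2, THEN conjunct2, THEN conjunct1]
  PA'[THEN conjunct2, THEN conjunct2, THEN conjunct2, THEN conjunct2, THEN conjunct2,
    THEN conjunct2, THEN conjunct2, THEN conjunct2]

lemma CA: "comm_alg_on R A"
proof -
  have "pcm R a a" using PA_all(5) aC by (rule bspec)
  then show ?thesis using PA_all(6)[rule_format, OF aC aC aC] by simp
qed

lemma CA': "pzero R \<in> A \<and> pone R \<in> A \<and>
     (\<forall>x\<in>A. \<forall>y\<in>A. pcm R x y \<and> padd R x y \<in> A \<and> pmul R x y \<in> A) \<and>
     (\<forall>c. \<forall>x\<in>A. psmul R c x \<in> A) \<and>
     (\<forall>x\<in>A. \<forall>y\<in>A. \<forall>z\<in>A.
        padd R (padd R x y) z = padd R x (padd R y z) \<and>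
        pmul R (pmul R x y) z = pmul R x (pmul R y z) \<and>
        pmul R x (padd R y z) = padd R (pmul R x y) (pmul R x z)) \<and>
     (\<forall>x\<in>A. \<forall>y\<in>A. padd R x y = padd R y x \<and> pmul R x y = pmul R y x) \<and>
     (\<forall>x\<in>A. padd R x (pzero R) = x \<and> pmul R x (pone R) = x \<and>
        (\<exists>y\<in>A. padd R x y = pzero R)) \<and>
     (\<forall>c d. \<forall>x\<in>A. \<forall>y\<in>A.
        psmul R c (psmul R d x) = psmul R (c * d) x \<and>
        psmul R (c + d) x = padd R (psmul R c x) (psmul R d x) \<and>
        psmul R c (padd R x y) = padd R (psmul R c x) (psmul R c y) \<and>
        psmul R c (pmul R x y) = pmul R (psmul R c x) y \<and>
        psmul R 1 x = x)"
  using CA unfolding comm_alg_on_def .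

lemmas C = CA'[THEN conjunct1] CA'[THEN conjunct2, THEN conjunct1]
  CA'[THEN conjunct2, THEN conjunct2, THEN conjunct1]
  CA'[THEN conjunct2, THEN conjunct2, THEN conjunct2, THEN conjunct1]
  CA'[THEN conjunct2, THEN conjunct2, THEN conjunct2, THEN conjunct2, THEN conjunct1]
  CA'[THEN conjunct2, THEN conjunct2, THEN conjunct2, THEN conjunct2, THEN conjunct2, THEN conjunct1]
  CA'[THEN conjunct2, THEN conjunct2, THEN conjunct2, THEN conjunct2, THEN conjunct2, THEN conjunct2, THEN conjunct1]
  CA'[THEN conjunct2, THEN conjunct2, THEN conjunct2, THEN conjunct2, THEN conjunct2, THEN conjunct2, THEN conjunct2]

lemma cm: "x \<in> A \<Longrightarrow> y \<in> A \<Longrightarrow> pcm R x y"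
  using C(3) by blast

lemma zA: "pzero R \<in> A"
  using C(1) by blast

lemma oA: "pone R \<in> A"
  using C(2) by blast

lemma addA: "x \<in> A \<Longrightarrow> y \<in> A \<Longrightarrow> padd R x y \<in> A"
  using C(3) by blast

lemma mulA: "x \<in> A \<Longrightarrow> y \<in> A \<Longrightarrow> pmul R x y \<in> A"
  using C(3) by blast

lemma smA: "x \<in> A \<Longrightarrow> psmul R c x \<in> A"
  using C(4) by blast

lemma add_assoc: "x \<in> A \<Longrightarrow> y \<in> A \<Longrightarrow> z \<in> A \<Longrightarrow> padd R (padd R x y) z = padd R x (padd R y z)"
  using C(5) by blast

lemma mul_assoc: "x \<in> A \<Longrightarrow> y \<in> A \<Longrightarrow> z \<in> A \<Longrightarrow> pmul R (pmul R x y) z = pmul R x (pmul R y z)"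
  using C(5) by blast

lemma distr: "x \<in> A \<Longrightarrow> y \<in> A \<Longrightarrow> z \<in> A \<Longrightarrow> pmul R x (padd R y z) = padd R (pmul R x y) (pmul R x z)"
  using C(5) by blast

lemma add_comm: "x \<in> A \<Longrightarrow> y \<in> A \<Longrightarrow> padd R x y = padd R y x"
  using C(6) by blast

lemma mul_comm: "x \<in> A \<Longrightarrow> y \<in> A \<Longrightarrow> pmul R x y = pmul R y x"
  using C(6) by blast

lemma add_0: "x \<in> A \<Longrightarrow> padd R x (pzero R) = x"
  using C(7) by blast

lemma mul_1: "x \<in> A \<Longrightarrow> pmul R x (pone R) = x"
  using C(7) by blast

lemma neg: "x \<in> A \<Longrightarrow> \<exists>y\<in>A. padd R x y = pzero R"
  using C(7) by blast

lemma sm_sm: "x \<in> A \<Longrightarrow> psmul R c (psmul R d x) = psmul R (c * d) x"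
  using C(8) by blast

lemma sm_add: "x \<in> A \<Longrightarrow> psmul R (c + d) x = padd R (psmul R c x) (psmul R d x)"
  using C(8) by blast

lemma sm_add2: "x \<in> A \<Longrightarrow> y \<in> A \<Longrightarrow> psmul R c (padd R x y) = padd R (psmul R c x) (psmul R c y)"
  using C(8) by blast

lemma sm_mul: "x \<in> A \<Longrightarrow> y \<in> A \<Longrightarrow> psmul R c (pmul R x y) = pmul R (psmul R c x) y"
  using C(8) by blast

lemma sm_1: "x \<in> A \<Longrightarrow> psmul R 1 x = x"
  using C(8) by blast

lemma A_sub: "A \<subseteq> pcarrier R"
proof
  fix x assume "x \<in> A" then show "x \<in> pcarrier R"
  proof induct
    case (gadd x y)
    then show ?case using PA_all(3)[rule_format, OF gadd(2) gadd(4) cm[OF gadd(1) gadd(3)]] by simp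
  next
    case (gmul x y)
    then show ?case using PA_all(3)[rule_format, OF gmul(2) gmul(4) cm[OF gmul(1) gmul(3)]] by simp
  next
    case (gsmul x c)
    then show ?case using PA_all(4) by simp
  qed (use PA_all(1,2) aC in auto)
qed

lemma cringS: "cring S"
proof (rule cringI)
  show "abelian_group S"
    apply (rule abelian_groupI)
       apply (simp add: addA)
      apply (simp add: zA)
     apply (simp add: add_assoc)
    apply (simp add: add_comm)
   apply (simp add: add_comm[OF zA] add_0)
  proof -
    fix x assume "x \<in> carrier S"
    then obtain y where "y \<in> A" "padd R x y = pzero R" using neg by auto
    then show "\<exists>y\<in>carrier S. y \<oplus>\<^bsub>S\<^esub> x = \<zero>\<^bsub>S\<^esub>"
      using add_comm[of x y] \<open>x \<in> carrier S\<close> by auto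
  qed
  show "comm_monoid S"
    apply (rule comm_monoidI)
    using oA mulA mul_assoc mul_comm mul_1 by auto
  fix x y z assume xyz: "x \<in> carrier S" "y \<in> carrier S" "z \<in> carrier S"
  then have "pmul R (padd R x y) z = pmul R z (padd R x y)" by (simp add: mul_comm addA)
  also have "\<dots> = padd R (pmul R z x) (pmul R z y)" using xyz by (simp add: distr)
  also have "\<dots> = padd R (pmul R x z) (pmul R y z)" using xyz by (simp add: mul_comm)
  finally show "(x \<oplus>\<^bsub>S\<^esub> y) \<otimes>\<^bsub>S\<^esub> z = x \<otimes>\<^bsub>S\<^esub> z \<oplus>\<^bsub>S\<^esub> y \<otimes>\<^bsub>S\<^esub> z"
    by simp
qed

sublocale S: cring S by (rule cringS)

declare addA[simp] mulA[simp]

lemma basic_simps[simp]: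
  "x \<in> A \<Longrightarrow> padd R x (pzero R) = x" "x \<in> A \<Longrightarrow> padd R (pzero R) x = x"
  "x \<in> A \<Longrightarrow> pmul R x (pzero R) = pzero R" "x \<in> A \<Longrightarrow> pmul R (pzero R) x = pzero R"
  "x \<in> A \<Longrightarrow> pmul R (pone R) x = x" "x \<in> A \<Longrightarrow> pmul R x (pone R) = x"
  "pzero R \<in> A" "pone R \<in> A"
  using S.r_zero[of x] S.l_zero[of x] S.r_null[of x] S.l_null[of x] S.l_one[of x] S.r_one[of x]
  by (simp_all add: zA oA)

definition iota :: "'k \<Rightarrow> 'a" where "iota c = psmul R c (pone R)"

lemma iotaA[simp]: "iota c \<in> A" by (simp add: iota_def smA oA)

lemma sm_eq: "x \<in> A \<Longrightarrow> psmul R c x = pmul R (iota c) x"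
  unfolding iota_def by (metis sm_mul oA mul_comm mul_1)

lemma iota_add: "iota (c + d) = padd R (iota c) (iota d)"
  unfolding iota_def by (simp add: sm_add oA)

lemma iota_mul: "iota (c * d) = pmul R (iota c) (iota d)"
  by (metis iota_def sm_sm oA sm_eq iotaA)

lemma iota_1: "iota 1 = pone R" by (simp add: iota_def sm_1 oA)

lemma iota_0: "iota 0 = pzero R"
proof -
  have "iota 0 \<oplus>\<^bsub>S\<^esub> iota 0 = iota 0" using iota_add[of 0 0] by simp
  then show ?thesis using S.add.l_cancel_one[of "iota 0" "iota 0"] by simp
qed

definition E :: "'k poly \<Rightarrow> 'a" where "E p = peval R a (coeffs p)"

lemma peval_A[simp]: "peval R a cs \<in> A"
  by (induct cs) (auto intro: pgen.intros)

lemma EA[simp]: "E p \<in> A" by (simp add: E_def)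

lemma aA[simp]: "a \<in> A" by (rule g1)

lemma E_0[simp]: "E 0 = pzero R" by (simp add: E_def)

lemma E_pCons: "E (pCons c p) = padd R (iota c) (pmul R a (E p))"
proof (cases "pCons c p = 0")
  case True
  then have "c = 0" "p = 0" by auto
  have "pmul R a (pzero R) = pzero R" using S.r_null[of a] by simp
  then show ?thesis using \<open>c = 0\<close> \<open>p = 0\<close> by (simp add: iota_0 add_0 zA)
next
  case False
  then have "coeffs (pCons c p) = c # coeffs p"
    by (auto simp: cCons_def)
  then show ?thesis by (simp add: E_def iota_def)
qed

lemma E_add: "E (p + q) = padd R (E p) (E q)"
proof (induct p q rule: poly_induct2)
  case 0 then show ?case by simp
next
  case (pCons c p d q)
  have "E (pCons c p + pCons d q) = padd R (iota (c + d)) (pmul R a (E (p + q)))"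
    by (simp add: E_pCons)
  also have "\<dots> = (iota c \<oplus>\<^bsub>S\<^esub> a \<otimes>\<^bsub>S\<^esub> E p) \<oplus>\<^bsub>S\<^esub> (iota d \<oplus>\<^bsub>S\<^esub> a \<otimes>\<^bsub>S\<^esub> E q)"
    unfolding pCons iota_add using iotaA EA aA by (simp only: S_simps[symmetric]) algebra
  finally show ?case by (simp add: E_pCons)
qed

lemma E_smult: "E (smult c p) = pmul R (iota c) (E p)"
proof (induct p)
  case 0 then show ?case by simp
next
  case (pCons d p)
  have "E (smult c (pCons d p)) = padd R (iota (c * d)) (pmul R a (E (smult c p)))"
    by (simp add: E_pCons)
  also have "\<dots> = iota c \<otimes>\<^bsub>S\<^esub> (iota d \<oplus>\<^bsub>S\<^esub> a \<otimes>\<^bsub>S\<^esub> E p)"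
    unfolding pCons iota_mul using iotaA EA aA by (simp only: S_simps[symmetric]) algebra
  finally show ?case by (simp add: E_pCons)
qed

lemma E_mult: "E (p * q) = pmul R (E p) (E q)"
proof (induct p)
  case 0 then show ?case by simp
next
  case (pCons c p)
  have "E (pCons c p * q) = E (smult c q) \<oplus>\<^bsub>S\<^esub> (iota 0 \<oplus>\<^bsub>S\<^esub> a \<otimes>\<^bsub>S\<^esub> E (p * q))"
    by (simp add: E_add E_pCons)
  also have "\<dots> = (iota c \<oplus>\<^bsub>S\<^esub> a \<otimes>\<^bsub>S\<^esub> E p) \<otimes>\<^bsub>S\<^esub> E q"
    unfolding pCons E_smult iota_0 using iotaA EA aA by (simp only: S_simps[symmetric]) algebra
  finally show ?case by (simp add: E_pCons)
qed

lemma E_Poly: "peval R a cs = E (Poly cs)"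
  by (induct cs) (simp_all add: E_pCons iota_def)

lemma kpoly_E: "kpoly R a = range E"
proof
  show "kpoly R a \<subseteq> range E"
  proof
    fix x assume "x \<in> kpoly R a"
    then obtain cs where "x = peval R a cs" unfolding kpoly_def by blast
    then have "x = E (Poly cs)" by (simp only: E_Poly)
    then show "x \<in> range E" by (rule image_eqI) simp
  qed
  show "range E \<subseteq> kpoly R a"
  proof
    fix x assume "x \<in> range E"
    then obtain p where "x = E p" by blast
    then have "x = peval R a (coeffs p)" by (simp only: E_def)
    then show "x \<in> kpoly R a" unfolding kpoly_def by blast
  qed
qed

lemma hom:
  assumes "pmorphism R f" "x \<in> A" "y \<in> A"
  shows "f (padd R x y) = f x + f y" "f (pmul R x y) = f x * f y" "f (iota c) = c"
proof -
  have xy: "x \<in> pcarrier R" "y \<in> pcarrier R" "pcm R x y" using assms A_sub cm by auto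
  show "f (padd R x y) = f x + f y" "f (pmul R x y) = f x * f y"
    using assms(1) xy unfolding pmorphism_def by auto
  have "pone R \<in> pcarrier R" "pcm R (pone R) (pone R)" using oA A_sub cm by auto
  then show "f (iota c) = c" using assms(1) unfolding pmorphism_def iota_def by auto
qed

lemma fE: assumes "pmorphism R f" shows "f (E p) = poly p (f a)"
proof (induct p)
  case 0 then show ?case using assms by (simp add: pmorphism_def)
next
  case (pCons c p)
  then show ?case by (simp add: E_pCons hom[OF assms] hom(3)[OF assms iotaA iotaA])
qed

lemma exists_ann:
  assumes "palgebraic R a"
  shows "\<exists>p. p \<noteq> 0 \<and> E p = pzero R"
proof -
  obtain B where B: "finite B" "B \<subseteq> kpoly R a" "kpoly R a \<subseteq> pspan R B"
    using assms unfolding palgebraic_def by blast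
  have "\<forall>b\<in>B. \<exists>q. E q = b" using B(2) kpoly_E by auto
  then obtain qf where qf: "\<And>b. b \<in> B \<Longrightarrow> E (qf b) = b" by metis
  define D where "D = Max (insert 0 ((\<lambda>b. degree (qf b)) ` B))"
  have Dq: "b \<in> B \<Longrightarrow> degree (qf b) \<le> D" for b
    unfolding D_def using B(1) by (intro Max_ge) auto
  have span: "x \<in> pspan R B \<Longrightarrow> \<exists>q. degree q \<le> D \<and> E q = x" for x
  proof (induct rule: pspan.induct)
    case s0 then show ?case by (intro exI[of _ 0]) simp
  next
    case (sB b) then show ?case using qf Dq by blast
  next
    case (sadd x y)
    then obtain q1 q2 where "degree q1 \<le> D" "E q1 = x" "degree q2 \<le> D" "E q2 = y" by blast
    then show ?case
      by (intro exI[of _ "q1 + q2"]) (auto simp: E_add intro: order.trans[OF degree_add_le])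
  next
    case (ssmul x c)
    then obtain q where "degree q \<le> D" "E q = x" by blast
    then show ?case
      by (intro exI[of _ "smult c q"]) (auto simp: E_smult sm_eq intro: order.trans[OF degree_smult_le])
  qed
  define m :: "'k poly" where "m = monom 1 (Suc D)"
  have "E m \<in> pspan R B" using B(3) kpoly_E by auto
  then obtain q where q: "degree q \<le> D" "E q = E m" using span by blast
  have dm: "degree m = Suc D" by (simp add: m_def degree_monom_eq)
  have ne: "m - q \<noteq> 0" using q(1) dm by auto
  have "E (m - q) \<oplus>\<^bsub>S\<^esub> E q = \<zero>\<^bsub>S\<^esub> \<oplus>\<^bsub>S\<^esub> E q"
    using E_add[of "m - q" q] q(2) by simp
  then have "E (m - q) = pzero R"
    using S.add.right_cancel[of "E q" "E (m - q)" "\<zero>\<^bsub>S\<^esub>"] by simp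
  then show ?thesis using ne by blast
qed

lemma agree:
  assumes alg: "palgebraic R a" and f: "pmorphism R f" and g: "pmorphism R g"
    and idem: "\<forall>e\<in>pcarrier R. pmul R e e = e \<longrightarrow> f e = g e"
  shows "f a = g a"
proof (rule ccontr)
  assume neq: "f a \<noteq> g a"
  define l where "l = f a"
  define u where "u = g a"
  obtain p where p: "p \<noteq> 0" "E p = pzero R" using exists_ann[OF alg] by blast
  have f0: "f (pzero R) = 0" "g (pzero R) = 0" using f g by (auto simp: pmorphism_def)
  have pl: "poly p l = 0" using fE[OF f, of p] p f0 l_def by simp
  have pu: "poly p u = 0" using fE[OF g, of p] p f0 u_def by simp
  define r where "r = order l p"
  obtain q where pq: "p = [:-l, 1:] ^ r * q" and nd: "\<not> [:-l, 1:] dvd q"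
    using order_decomp[OF p(1), of l] r_def by blast
  have r0: "r \<noteq> 0" using pl p(1) order_root r_def by blast
  have ql: "poly q l \<noteq> 0" using nd poly_eq_0_iff_dvd by blast
  have qu: "poly q u = 0" using pu neq unfolding pq l_def u_def by simp
  define w where "w = 1 - smult (inverse (poly q l)) q"
  have wl: "poly w l = 0" using ql by (simp add: w_def)
  have wu: "poly w u = 1" using qu by (simp add: w_def)
  have "[:-l, 1:] dvd w" using wl poly_eq_0_iff_dvd by blast
  then obtain k1 where k1: "w ^ r = [:-l, 1:] ^ r * k1"
    using dvd_power_same by (metis dvdE)
  have qd: "q dvd 1 - w ^ n" for n
  proof (induct n)
    case 0 then show ?case by simp
  next
    case (Suc n)
    have eq: "1 - w ^ Suc n = (1 - w ^ n) + w ^ n * smult (inverse (poly q l)) q"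
      by (simp add: w_def algebra_simps)
    show ?case unfolding eq by (intro dvd_add Suc dvd_mult dvd_smult dvd_refl)
  qed
  then obtain k2 where k2: "1 - w ^ r = q * k2" by (metis dvdE)
  define e where "e = 1 - w ^ r"
  have ee: "e * e = e + p * (- (k1 * k2))"
  proof -
    have "e * e = e - w ^ r * (1 - w ^ r)" by (simp add: e_def algebra_simps)
    also have "w ^ r * (1 - w ^ r) = ([:-l, 1:] ^ r * k1) * (q * k2)"
      by (subst k2, subst k1) (rule refl)
    also have "\<dots> = p * (k1 * k2)" unfolding pq by (simp add: algebra_simps)
    finally show ?thesis by simp
  qed
  have "pmul R (E e) (E e) = E e"
  proof -
    have "pmul R (E e) (E e) = E (e * e)" by (simp only: E_mult)
    also have "\<dots> = E (e + p * (- (k1 * k2)))" by (simp only: ee)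
    also have "\<dots> = padd R (E e) (pmul R (E p) (E (- (k1 * k2))))" by (simp only: E_add E_mult)
    also have "\<dots> = E e" using p(2) by simp
    finally show ?thesis .
  qed
  moreover have "E e \<in> pcarrier R" using A_sub by auto
  ultimately have "f (E e) = g (E e)" using idem by blast
  moreover have "f (E e) = 1" using fE[OF f, of e] wl r0 by (simp add: e_def l_def)
  moreover have "g (E e) = 0" using fE[OF g, of e] wu by (simp add: e_def u_def)
  ultimately show False by simp
qed

end

theorem lemma3p6:
  fixes R :: "('k::alg_closed_field, 'a) palg"
    and f g :: "'a \<Rightarrow> 'k"
  assumes "partial_algebra R"
    and "\<forall>a\<in>pcarrier R. palgebraic R a"
    and "pmorphism R f" and "pmorphism R g"
    and "\<forall>e\<in>pcarrier R. pmul R e e = e \<longrightarrow> f e = g e"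
  shows "\<forall>a\<in>pcarrier R. f a = g a"
proof
  fix a assume "a \<in> pcarrier R"
  then interpret pctx R a using assms(1) by unfold_locales
  show "f a = g a" using agree assms \<open>a \<in> pcarrier R\<close> by blast
qed

end
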